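(* Let $V$ be a complex vector space of dimension $n\ge1$, and let $A,B$ be complex $n\times m$ matrices of rank $n$, with associated surjective maps $\rho_1=1_V\otimes A$, $\rho_2=1_V\otimes B:V^{\oplus m}\to V^{\oplus n}$. Then $\rho_1^{-1}(D_n)=\rho_2^{-1}(D_n)$ if and only if $\ker A=\ker B$.
   Context: $V^{\oplus n}$ is identified with the space of $n\times n$ complex matrices (an $n$-tuple of vectors of $V\cong\mathbb C^n$ as columns), and $D_n\subset V^{\oplus n}$ is the determinantal hypersurface $\{\det=0\}$. For a matrix $A=(a_{ij})$, $1_V\otimes A$ sends $(w_1,\dots,w_m)$ to $(\sum_ja_{1j}w_j,\dots,\sum_ja_{nj}w_j)$. *)

theory Defs
  imports "HOL-Analysis.Analysis"
begin

text \<open>An element of V^(+m) (V = C^n) is an m-tuple of vectors of V, represented as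
  W :: complex^'n^'m with W$j the j-th vector.  An element of V^(+n) is an n-tuple
  of vectors of V, i.e. an n x n matrix (the i-th vector is row i).\<close>

definition tensor_map :: "complex^'m^'n \<Rightarrow> complex^'n^'m \<Rightarrow> complex^'n^'n" where
  "tensor_map A W = (\<chi> i. \<Sum>j\<in>UNIV. A$i$j *s W$j)"

definition det_hypersurface :: "(complex^'n^'n) set" where
  "det_hypersurface = {X. det X = 0}"

definition mat_kernel :: "complex^'m^'n \<Rightarrow> (complex^'m) set" where
  "mat_kernel A = {x. A *v x = 0}"

end

theory Submission
  imports Defs
begin

lemma tm_eq: "tensor_map A W = A ** W"
  by (simp add: tensor_map_def matrix_matrix_mult_def vec_eq_iff sum_component)

lemma det0_iff:
  fixes M :: "'a::field^'n^'n"
  shows "det M = 0 \<longleftrightarrow> (\<exists>c. c \<noteq> 0 \<and> M *v c = 0)"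
  by (metis invertible_det_nz invertible_left_inverse matrix_left_invertible_ker)

lemma full_rank_right_inv:
  fixes A :: "complex^'m^'n"
  assumes "rank A = CARD('n)"
  shows "\<exists>R. A ** R = mat 1"
proof -
  have "\<forall>c. sum (\<lambda>i::'n. c i *s row i A) UNIV = 0 \<longrightarrow> (\<forall>i. c i = 0)"
  proof (rule allI, rule impI, rule ccontr)
    fix c assume h: "sum (\<lambda>i::'n. c i *s row i A) UNIV = 0" and "\<not> (\<forall>i. c i = 0)"
    then obtain k where ck: "c k \<noteq> 0" by blast
    define S where "S = (\<lambda>i. row i A) ` (UNIV - {k})"
    have "c k *s row k A + (\<Sum>i\<in>UNIV - {k}. c i *s row i A) = 0"
      using h by (simp add: sum.remove[of UNIV k])
    hence "c k *s row k A = - (\<Sum>i\<in>UNIV - {k}. c i *s row i A)"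
      by (simp add: eq_neg_iff_add_eq_0)
    hence "(1 / c k) *s (c k *s row k A) = (1 / c k) *s (- (\<Sum>i\<in>UNIV - {k}. c i *s row i A))"
      by simp
    hence "row k A = (1 / c k) *s (- (\<Sum>i\<in>UNIV - {k}. c i *s row i A))"
      using ck by (simp add: vector_smult_assoc)
    hence rk: "row k A \<in> vec.span S"
    proof -
      have "(\<Sum>i\<in>UNIV - {k}. c i *s row i A) \<in> vec.span S"
      proof (rule vec.span_sum)
        fix i assume "i \<in> UNIV - {k}"
        hence "row i A \<in> S" by (simp add: S_def)
        thus "c i *s row i A \<in> vec.span S" by (intro vec.span_scale vec.span_base)
      qed
      hence "(1 / c k) *s (- (\<Sum>i\<in>UNIV - {k}. c i *s row i A)) \<in> vec.span S"
        by (intro vec.span_scale vec.span_neg)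
      thus ?thesis using \<open>row k A = _\<close> by simp
    qed
    have "rows A \<subseteq> vec.span S"
    proof
      fix r assume "r \<in> rows A"
      then obtain i where r: "r = row i A" by (auto simp: rows_def)
      show "r \<in> vec.span S"
      proof (cases "i = k")
        case True thus ?thesis using rk r by simp
      next
        case False thus ?thesis using r by (intro vec.span_base) (simp add: S_def)
      qed
    qed
    hence "vec.dim (rows A) \<le> card S"
      by (rule vec.dim_le_card) (simp add: S_def)
    also have "card S \<le> card (UNIV - {k::'n})" unfolding S_def by (rule card_image_le) simp
    also have "\<dots> = CARD('n) - 1" by (simp add: card_Diff_singleton)
    finally have r1: "rank A \<le> CARD('n) - 1" by (simp add: row_rank_def_gen)
    have r2: "0 < CARD('n)" by (simp add: card_gt_0_iff)
    show False using r1 r2 assms by linarith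
  qed
  thus ?thesis by (simp add: matrix_right_invertible_independent_rows)
qed

lemma ker_sub:
  fixes A B :: "complex^'m^'n"
  assumes "rank B = CARD('n)"
    and sub: "\<And>W. det (A ** W) = 0 \<Longrightarrow> det (B ** W) = 0"
  shows "mat_kernel A \<subseteq> mat_kernel B"
proof
  fix x assume "x \<in> mat_kernel A"
  hence Ax: "A *v x = 0" by (simp add: mat_kernel_def)
  obtain R where R: "B ** R = mat 1" using full_rank_right_inv[OF assms(1)] by blast
  show "x \<in> mat_kernel B"
  proof (rule ccontr)
    assume "x \<notin> mat_kernel B"
    hence "B *v x \<noteq> 0" by (simp add: mat_kernel_def)
    then obtain k where k: "(B *v x)$k \<noteq> 0" by (metis vec_eq_iff zero_index)
    define W :: "complex^'n^'m" where "W = (\<chi> j l. if l = k then x$j else R$j$l)"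
    have Wx: "W *v axis k 1 = x"
    proof -
      have "(W *v axis k 1)$j = x$j" for j
      proof -
        have "(W *v axis k 1)$j = (\<Sum>l\<in>UNIV. W$j$l * axis k 1 $ l)"
          by (simp add: matrix_vector_mult_def)
        also have "\<dots> = (\<Sum>l\<in>UNIV. if l = k then x$j else 0)"
          by (rule sum.cong) (auto simp: W_def axis_def)
        finally show ?thesis by simp
      qed
      thus ?thesis by (simp add: vec_eq_iff)
    qed
    have "(A ** W) *v axis k 1 = 0"
      by (simp add: Wx Ax flip: matrix_vector_mul_assoc)
    moreover have "axis k (1::complex) \<noteq> 0" by (simp add: axis_eq_0_iff)
    ultimately have "det (A ** W) = 0" using det0_iff by blast
    hence d: "det (B ** W) = 0" by (rule sub)
    have "B ** W = (\<chi> i j. if j = k then (mat 1 *v (B *v x))$i else (mat 1 :: complex^'n^'n)$i$j)"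
    proof -
      have "(B ** W)$i$j = (if j = k then (B *v x)$i else (B ** R)$i$j)" for i j
        by (simp add: W_def matrix_matrix_mult_def matrix_vector_mult_def)
      thus ?thesis using R by (simp add: vec_eq_iff matrix_vector_mul_lid)
    qed
    hence "det (B ** W) = (B *v x)$k" using cramer_lemma[where A="mat 1" and k=k and x="B *v x"] by simp
    with d k show False by simp
  qed
qed

theorem mainTheorem12:
  fixes A B :: "complex^'m^'n"
  assumes "rank A = CARD('n)" and "rank B = CARD('n)"
  shows "(tensor_map A -` det_hypersurface = tensor_map B -` det_hypersurface)
     \<longleftrightarrow> mat_kernel A = mat_kernel B"
proof
  assume h: "tensor_map A -` det_hypersurface = tensor_map B -` det_hypersurface"
  have e: "det (A ** W) = 0 \<longleftrightarrow> det (B ** W) = 0" for W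
    using h by (auto simp: set_eq_iff tm_eq det_hypersurface_def)
  show "mat_kernel A = mat_kernel B"
    using ker_sub[OF assms(2)] ker_sub[OF assms(1)] e by blast
next
  assume k: "mat_kernel A = mat_kernel B"
  have "A *v y = 0 \<longleftrightarrow> B *v y = 0" for y
    using k by (auto simp: mat_kernel_def set_eq_iff)
  hence "det (A ** W) = 0 \<longleftrightarrow> det (B ** W) = 0" for W :: "complex^'n^'m"
    unfolding det0_iff by (simp add: matrix_vector_mul_assoc[symmetric])
  thus "tensor_map A -` det_hypersurface = tensor_map B -` det_hypersurface"
    by (auto simp: tm_eq det_hypersurface_def)
qed

end
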